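(* If $M$ is a term of $\ell\Lambda_\infty^{4S}$, $M\to_0^* N$ and $M\to_0^* L$, then there is $P$ such that $N\to_0^* P$ and $L\to_0^* P$.
   Context: Preterms: possibly infinite trees generated by $M ::= x \mid MN \mid \lambda x.M \mid \lambda^{\downarrow}x.M \mid \lambda^{\uparrow}x.M \mid \downarrow M \mid \uparrow M$ ($\downarrow M$ inductive box, $\uparrow M$ coinductive box); substitution is capture-avoiding. Patterns: $x,\downarrow x,\uparrow x,\#x,\dagger x$; environments: finite sets of patterns, each variable in at most one; $\Theta,\Xi,\Psi,\Phi$ linear environments with marked versions $\#\Theta$ etc.; $\Upsilon,\Pi$ environments with only patterns $y$, $\downarrow y$; commas are disjoint unions. A term of $\ell\Lambda_\infty^{4S}$ is a preterm $M$ with $\Gamma\vdash M$ derivable for some $\Gamma$ by: (vl) $\#\Theta,\uparrow\Xi,\dagger\Psi,x\vdash x$; (vd) $\#\Theta,\uparrow\Xi,\dagger\Psi,\#x\vdash x$; (va) $\#\Theta,\uparrow\Xi,\dagger\Psi,\dagger x\vdash x$; (a) from $\Upsilon,\#\Theta,\uparrow\Xi,\dagger\Psi\vdash M$ and $\Pi,\#\Theta,\uparrow\Xi,\dagger\Psi\vdash N$ infer $\Upsilon,\Pi,\#\Theta,\uparrow\Xi,\dagger\Psi\vdash MN$; (ll) $\Gamma,x\vdash M$ gives $\Gamma\vdash\lambda x.M$; (li)$_1$ $\Gamma,\#x\vdash M$ gives $\Gamma\vdash\lambda^\downarrow x.M$; (li)$_2$ $\Gamma,\downarrow x\vdash M$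 gives $\Gamma\vdash\lambda^\downarrow x.M$; (lc) $\Gamma,\uparrow x\vdash M$ gives $\Gamma\vdash\lambda^\uparrow x.M$; (mi) from $\Xi,\uparrow\Psi,\dagger\Phi\vdash M$ infer $\#\Theta,\downarrow\Xi,\uparrow\Psi,\dagger\Phi\vdash\downarrow M$; (mc) from $\dagger\Xi,\dagger\Psi\vdash M$ infer $\#\Theta,\uparrow\Xi,\dagger\Psi\vdash\uparrow M$; (mc) coinductive, others inductive (every infinite branch of a derivation contains infinitely many (mc)). Basic reduction: $(\lambda x.M)N\mapsto M[N/x]$, $(\lambda^\downarrow x.M)(\downarrow N)\mapsto M[N/x]$, $(\lambda^\uparrow x.M)(\uparrow N)\mapsto M[N/x]$. $M\to_0 N$ iff $M=C[L]$, $N=C[P]$, $L\mapsto P$, where $C$ is a one-hole context whose hole lies inside no coinductive box $\uparrow(\cdot)$ (it may lie inside inductive boxes); $\to_0^*$ is its reflexive-transitive closure. *)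

theory Defs
  imports Main
begin

text \<open>Preterms: possibly infinite trees, variables as de Bruijn indices
  (so terms are identified up to alpha-conversion and substitution is
  automatically capture-avoiding).\<close>

codatatype trm =
    Var nat
  | App trm trm
  | Lam trm
  | LamI trm       \<comment> \<open>\<lambda>\<down>x.M\<close>
  | LamC trm       \<comment> \<open>\<lambda>\<up>x.M\<close>
  | IBox trm       \<comment> \<open>\<down>M, inductive box\<close>
  | CBox trm       \<comment> \<open>\<up>M, coinductive box\<close>

primcorec ren :: "(nat \<Rightarrow> nat) \<Rightarrow> trm \<Rightarrow> trm" where
  "ren f t = (case t of
      Var n \<Rightarrow> Var (f n)
    | App a b \<Rightarrow> App (ren f a) (ren f b)
    | Lam a \<Rightarrow> Lam (ren (case_nat 0 (\<lambda>n. Suc (f n))) a)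
    | LamI a \<Rightarrow> LamI (ren (case_nat 0 (\<lambda>n. Suc (f n))) a)
    | LamC a \<Rightarrow> LamC (ren (case_nat 0 (\<lambda>n. Suc (f n))) a)
    | IBox a \<Rightarrow> IBox (ren f a)
    | CBox a \<Rightarrow> CBox (ren f a))"

definition lift :: "(nat \<Rightarrow> trm) \<Rightarrow> nat \<Rightarrow> trm" where
  "lift \<sigma> = case_nat (Var 0) (\<lambda>n. ren Suc (\<sigma> n))"

primcorec subst :: "(nat \<Rightarrow> trm) \<Rightarrow> trm \<Rightarrow> trm" where
  "subst \<sigma> t = (case t of
      Var n \<Rightarrow> \<sigma> n
    | App a b \<Rightarrow> App (subst \<sigma> a) (subst \<sigma> b)
    | Lam a \<Rightarrow> Lam (subst (lift \<sigma>) a)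
    | LamI a \<Rightarrow> LamI (subst (lift \<sigma>) a)
    | LamC a \<Rightarrow> LamC (subst (lift \<sigma>) a)
    | IBox a \<Rightarrow> IBox (subst \<sigma> a)
    | CBox a \<Rightarrow> CBox (subst \<sigma> a))"

text \<open>M[N/x] where x is the variable bound by the outermost binder (index 0).\<close>
definition subst0 :: "trm \<Rightarrow> trm \<Rightarrow> trm" where
  "subst0 M N = subst (case_nat N Var) M"

text \<open>Patterns: x, \<down>x, \<up>x, #x, \<dagger>x.\<close>
datatype pat = PLin | PInd | PCoi | PHash | PDag

type_synonym env = "nat \<Rightarrow> pat option"

definition ext :: "pat \<Rightarrow> env \<Rightarrow> env" where
  "ext k \<Gamma> = case_nat (Some k) \<Gamma>"

text \<open>"#\<Theta>, \<up>\<Xi>, \<dagger>\<Psi>" shape: only patterns #x, \<up>x, \<dagger>x.\<close>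
definition shared :: "pat option \<Rightarrow> bool" where
  "shared p \<longleftrightarrow> p \<in> {None, Some PHash, Some PCoi, Some PDag}"

text \<open>Splitting for rule (a): \<Gamma> = \<Upsilon>,\<Pi>,#\<Theta>,\<up>\<Xi>,\<dagger>\<Psi>; \<Gamma>1 = \<Upsilon>,#\<Theta>,\<up>\<Xi>,\<dagger>\<Psi>; \<Gamma>2 = \<Pi>,#\<Theta>,\<up>\<Xi>,\<dagger>\<Psi>.\<close>
definition app_split :: "env \<Rightarrow> env \<Rightarrow> env \<Rightarrow> bool" where
  "app_split \<Gamma> \<Gamma>1 \<Gamma>2 \<longleftrightarrow> (\<forall>v.
     (\<Gamma> v \<in> {Some PLin, Some PInd} \<and>
        ((\<Gamma>1 v = \<Gamma> v \<and> \<Gamma>2 v = None) \<or> (\<Gamma>1 v = None \<and> \<Gamma>2 v = \<Gamma> v)))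
   \<or> (shared (\<Gamma> v) \<and> \<Gamma>1 v = \<Gamma> v \<and> \<Gamma>2 v = \<Gamma> v))"

text \<open>Premise environment of (mi): #\<Theta>,\<down>\<Xi>,\<up>\<Psi>,\<dagger>\<Phi> \<mapsto> \<Xi>,\<up>\<Psi>,\<dagger>\<Phi>.\<close>
definition mi_env :: "env \<Rightarrow> env" where
  "mi_env \<Gamma> v = (case \<Gamma> v of
      Some PInd \<Rightarrow> Some PLin | Some PCoi \<Rightarrow> Some PCoi | Some PDag \<Rightarrow> Some PDag | _ \<Rightarrow> None)"

text \<open>Premise environment of (mc): #\<Theta>,\<up>\<Xi>,\<dagger>\<Psi> \<mapsto> \<dagger>\<Xi>,\<dagger>\<Psi>.\<close>
definition mc_env :: "env \<Rightarrow> env" where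
  "mc_env \<Gamma> v = (case \<Gamma> v of
      Some PCoi \<Rightarrow> Some PDag | Some PDag \<Rightarrow> Some PDag | _ \<Rightarrow> None)"

text \<open>Mixed inductive/coinductive derivations: all rules are inductive
  except (mc), whose premise refers to the coinductive parameter R
  (nested fixpoint \<nu>X.\<mu>Y, i.e. every infinite branch has infinitely many (mc)).\<close>
inductive typ_ind :: "(env \<Rightarrow> trm \<Rightarrow> bool) \<Rightarrow> env \<Rightarrow> trm \<Rightarrow> bool"
  for R :: "env \<Rightarrow> trm \<Rightarrow> bool" where
  vl: "\<Gamma> x = Some PLin \<Longrightarrow> (\<forall>y. y \<noteq> x \<longrightarrow> shared (\<Gamma> y)) \<Longrightarrow> typ_ind R \<Gamma> (Var x)"
| vd: "\<Gamma> x = Some PHash \<Longrightarrow> (\<forall>y. y \<noteq> x \<longrightarrow> shared (\<Gamma> y)) \<Longrightarrow> typ_ind R \<Gamma> (Var x)"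
| va: "\<Gamma> x = Some PDag \<Longrightarrow> (\<forall>y. y \<noteq> x \<longrightarrow> shared (\<Gamma> y)) \<Longrightarrow> typ_ind R \<Gamma> (Var x)"
| a: "app_split \<Gamma> \<Gamma>1 \<Gamma>2 \<Longrightarrow> typ_ind R \<Gamma>1 M \<Longrightarrow> typ_ind R \<Gamma>2 N \<Longrightarrow> typ_ind R \<Gamma> (App M N)"
| ll: "typ_ind R (ext PLin \<Gamma>) M \<Longrightarrow> typ_ind R \<Gamma> (Lam M)"
| li1: "typ_ind R (ext PHash \<Gamma>) M \<Longrightarrow> typ_ind R \<Gamma> (LamI M)"
| li2: "typ_ind R (ext PInd \<Gamma>) M \<Longrightarrow> typ_ind R \<Gamma> (LamI M)"
| lc: "typ_ind R (ext PCoi \<Gamma>) M \<Longrightarrow> typ_ind R \<Gamma> (LamC M)"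
| mi: "(\<forall>v. \<Gamma> v \<noteq> Some PLin) \<Longrightarrow> typ_ind R (mi_env \<Gamma>) M \<Longrightarrow> typ_ind R \<Gamma> (IBox M)"
| mc: "(\<forall>v. shared (\<Gamma> v)) \<Longrightarrow> R (mc_env \<Gamma>) M \<Longrightarrow> typ_ind R \<Gamma> (CBox M)"

lemma typ_ind_mono[mono]: "R \<le> S \<Longrightarrow> typ_ind R \<le> typ_ind S"
proof (intro le_funI le_boolI)
  fix \<Gamma> M assume RS: "R \<le> S" and "typ_ind R \<Gamma> M"
  from this(2) show "typ_ind S \<Gamma> M"
    by (induction rule: typ_ind.induct) (use RS in \<open>auto intro: typ_ind.intros\<close>)
qed

coinductive der :: "env \<Rightarrow> trm \<Rightarrow> bool" where
  "typ_ind der \<Gamma> M \<Longrightarrow> der \<Gamma> M"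

definition is_term :: "trm \<Rightarrow> bool" where
  "is_term M \<longleftrightarrow> (\<exists>\<Gamma>. finite (dom \<Gamma>) \<and> der \<Gamma> M)"

inductive basic_red :: "trm \<Rightarrow> trm \<Rightarrow> bool" where
  "basic_red (App (Lam M) N) (subst0 M N)"
| "basic_red (App (LamI M) (IBox N)) (subst0 M N)"
| "basic_red (App (LamC M) (CBox N)) (subst0 M N)"

text \<open>Closure under one-hole contexts whose hole is not inside a coinductive box.\<close>
inductive red0 :: "trm \<Rightarrow> trm \<Rightarrow> bool" where
  base: "basic_red M N \<Longrightarrow> red0 M N"
| appL: "red0 M M' \<Longrightarrow> red0 (App M N) (App M' N)"
| appR: "red0 N N' \<Longrightarrow> red0 (App M N) (App M N')"
| lam: "red0 M M' \<Longrightarrow> red0 (Lam M) (Lam M')"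
| lamI: "red0 M M' \<Longrightarrow> red0 (LamI M) (LamI M')"
| lamC: "red0 M M' \<Longrightarrow> red0 (LamC M) (LamC M')"
| ibox: "red0 M M' \<Longrightarrow> red0 (IBox M) (IBox M')"

end

theory Submission
  imports Defs
begin

lemma ren_simps[simp]:
  "ren f (Var n) = Var (f n)"
  "ren f (App a b) = App (ren f a) (ren f b)"
  "ren f (Lam a) = Lam (ren (case_nat 0 (\<lambda>n. Suc (f n))) a)"
  "ren f (LamI a) = LamI (ren (case_nat 0 (\<lambda>n. Suc (f n))) a)"
  "ren f (LamC a) = LamC (ren (case_nat 0 (\<lambda>n. Suc (f n))) a)"
  "ren f (IBox a) = IBox (ren f a)"
  "ren f (CBox a) = CBox (ren f a)"
  by (subst ren.code; simp)+

lemma subst_simps[simp]: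
  "subst \<sigma> (Var n) = \<sigma> n"
  "subst \<sigma> (App a b) = App (subst \<sigma> a) (subst \<sigma> b)"
  "subst \<sigma> (Lam a) = Lam (subst (lift \<sigma>) a)"
  "subst \<sigma> (LamI a) = LamI (subst (lift \<sigma>) a)"
  "subst \<sigma> (LamC a) = LamC (subst (lift \<sigma>) a)"
  "subst \<sigma> (IBox a) = IBox (subst \<sigma> a)"
  "subst \<sigma> (CBox a) = CBox (subst \<sigma> a)"
  by (subst subst.code; simp)+

lemma lift_simps[simp]: "lift \<sigma> 0 = Var 0" "lift \<sigma> (Suc n) = ren Suc (\<sigma> n)"
  by (simp_all add: lift_def)

lemma trm_coind:
  assumes "R a b"
  and step: "\<And>a b. R a b \<Longrightarrow> a = b
     \<or> (\<exists>a1 a2 b1 b2. a = App a1 a2 \<and> b = App b1 b2 \<and> (R a1 b1 \<or> a1 = b1) \<and> (R a2 b2 \<or> a2 = b2))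
     \<or> (\<exists>a1 b1. a = Lam a1 \<and> b = Lam b1 \<and> (R a1 b1 \<or> a1 = b1))
     \<or> (\<exists>a1 b1. a = LamI a1 \<and> b = LamI b1 \<and> (R a1 b1 \<or> a1 = b1))
     \<or> (\<exists>a1 b1. a = LamC a1 \<and> b = LamC b1 \<and> (R a1 b1 \<or> a1 = b1))
     \<or> (\<exists>a1 b1. a = IBox a1 \<and> b = IBox b1 \<and> (R a1 b1 \<or> a1 = b1))
     \<or> (\<exists>a1 b1. a = CBox a1 \<and> b = CBox b1 \<and> (R a1 b1 \<or> a1 = b1))"
  shows "a = b"
  apply (rule trm.coinduct[where R="\<lambda>a b. R a b \<or> a = b"])
   apply (simp add: assms(1))
  apply (erule disjE)
   apply (drule step)
   apply (elim disjE exE conjE; simp)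
  apply simp
  done


lemma lift_Var_comp: "lift (Var \<circ> f) = Var \<circ> case_nat 0 (\<lambda>n. Suc (f n))"
  by (rule ext, case_tac x, simp_all)

lemma ren_as_subst: "ren f t = subst (Var \<circ> f) t"
  apply (rule trm_coind[where R="\<lambda>a b. \<exists>f t. a = ren f t \<and> b = subst (Var \<circ> f) t"])
   apply blast
  apply (elim exE conjE)
  apply (case_tac t)
  apply (auto simp: lift_Var_comp)
  done


lemma lift_comp_lf: "lift \<sigma> \<circ> case_nat 0 (\<lambda>n. Suc (f n)) = lift (\<sigma> \<circ> f)"
  by (rule ext, case_tac x, simp_all)

lemma subst_ren: "subst \<sigma> (ren f t) = subst (\<sigma> \<circ> f) t"
  apply (rule trm_coind[where R="\<lambda>a b. \<exists>\<sigma> f t. a = subst \<sigma> (ren f t) \<and> b = subst (\<sigma> \<circ> f) t"])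
   apply blast
  apply (elim exE conjE)
  apply (case_tac t)
  apply (auto simp: lift_comp_lf)
  apply (metis lift_comp_lf)+
  done

lemma ren_ren: "ren f (ren g t) = ren (f \<circ> g) t"
  unfolding ren_as_subst[of f "ren g t"] subst_ren ren_as_subst[of "f \<circ> g"] by (simp add: comp_assoc)

lemma ren_lf_lift: "ren (case_nat 0 (\<lambda>n. Suc (f n))) \<circ> lift \<sigma> = lift (ren f \<circ> \<sigma>)"
  by (rule ext, case_tac x, simp_all add: ren_ren comp_def)

lemma ren_subst: "ren f (subst \<sigma> t) = subst (ren f \<circ> \<sigma>) t"
  apply (rule trm_coind[where R="\<lambda>a b. \<exists>\<sigma> f t. a = ren f (subst \<sigma> t) \<and> b = subst (ren f \<circ> \<sigma>) t"])
   apply blast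
  apply (elim exE conjE)
  apply (case_tac t)
  apply (auto simp: ren_lf_lift)
  apply (metis ren_lf_lift)+
  done

lemma subst_lift_lift: "subst (lift \<sigma>) \<circ> lift \<tau> = lift (subst \<sigma> \<circ> \<tau>)"
  apply (rule ext, case_tac x, simp_all add: subst_ren ren_subst)
  apply (rule arg_cong[where f="\<lambda>s. subst s _"])
  apply (rule ext, simp)
  done

lemma subst_subst: "subst \<sigma> (subst \<tau> t) = subst (subst \<sigma> \<circ> \<tau>) t"
  apply (rule trm_coind[where R="\<lambda>a b. \<exists>\<sigma> \<tau> t. a = subst \<sigma> (subst \<tau> t) \<and> b = subst (subst \<sigma> \<circ> \<tau>) t"])
   apply blast
  apply (elim exE conjE)
  apply (case_tac t)
  apply (auto simp: subst_lift_lift)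
  apply (metis subst_lift_lift)+
  done

lemma lift_Var: "lift Var = Var"
  by (rule ext, case_tac x, simp_all)

lemma subst_Var: "subst Var t = t"
  apply (rule trm_coind[where R="\<lambda>a b. \<exists>t. a = subst Var t \<and> b = t"])
   apply blast
  apply (elim exE conjE)
  apply (case_tac t)
  apply (auto simp: lift_Var)
  done

lemma case_nat_Suc_comp: "case_nat x Var \<circ> Suc = Var"
  by (rule ext, simp)

lemma subst_subst0: "subst \<sigma> (subst0 a b) = subst0 (subst (lift \<sigma>) a) (subst \<sigma> b)"
  unfolding subst0_def subst_subst
  apply (rule arg_cong[where f="\<lambda>s. subst s _"])
  apply (rule ext, case_tac x, simp_all add: subst_ren case_nat_Suc_comp subst_Var)
  done

lemma ren_subst0: "ren f (subst0 a b) = subst0 (ren (case_nat 0 (\<lambda>n. Suc (f n))) a) (ren f b)"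
  by (simp add: ren_as_subst subst_subst0 lift_Var_comp)


inductive freein :: "nat \<Rightarrow> trm \<Rightarrow> bool" where
  fVar: "freein n (Var n)"
| fApp1: "freein n a \<Longrightarrow> freein n (App a b)"
| fApp2: "freein n b \<Longrightarrow> freein n (App a b)"
| fLam: "freein (Suc n) a \<Longrightarrow> freein n (Lam a)"
| fLamI: "freein (Suc n) a \<Longrightarrow> freein n (LamI a)"
| fLamC: "freein (Suc n) a \<Longrightarrow> freein n (LamC a)"
| fIBox: "freein n a \<Longrightarrow> freein n (IBox a)"
| fCBox: "freein n a \<Longrightarrow> freein n (CBox a)"

inductive_simps freein_simps[simp]:
  "freein n (Var m)" "freein n (App a b)" "freein n (Lam a)" "freein n (LamI a)"
  "freein n (LamC a)" "freein n (IBox a)" "freein n (CBox a)"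

lemma freein_ren: "freein m s \<Longrightarrow> s = ren f t \<Longrightarrow> \<exists>n. m = f n \<and> freein n t"
proof (induction arbitrary: f t rule: freein.induct)
  case (fVar n) then show ?case by (cases t) auto
next
  case (fApp1 n a b) then show ?case by (cases t) auto
next
  case (fApp2 n b a) then show ?case by (cases t) auto
next
  case (fLam n a) show ?case
    proof -
    from fLam.prems obtain t' where t: "t = Lam t'" and a: "a = ren (case_nat 0 (\<lambda>n. Suc (f n))) t'"
      by (cases t) auto
    from fLam.IH[OF a] obtain k where k: "Suc n = case_nat 0 (\<lambda>n. Suc (f n)) k" "freein k t'" by blast
    then obtain j where "k = Suc j" by (cases k) auto
    with k t show ?thesis by auto
  qed
next
  case (fLamI n a) show ?case
    proof -
    from fLamI.prems obtain t' where t: "t = LamI t'" and a: "a = ren (case_nat 0 (\<lambda>n. Suc (f n))) t'"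
      by (cases t) auto
    from fLamI.IH[OF a] obtain k where k: "Suc n = case_nat 0 (\<lambda>n. Suc (f n)) k" "freein k t'" by blast
    then obtain j where "k = Suc j" by (cases k) auto
    with k t show ?thesis by auto
  qed
next
  case (fLamC n a) show ?case
    proof -
    from fLamC.prems obtain t' where t: "t = LamC t'" and a: "a = ren (case_nat 0 (\<lambda>n. Suc (f n))) t'"
      by (cases t) auto
    from fLamC.IH[OF a] obtain k where k: "Suc n = case_nat 0 (\<lambda>n. Suc (f n)) k" "freein k t'" by blast
    then obtain j where "k = Suc j" by (cases k) auto
    with k t show ?thesis by auto
  qed
next
  case (fIBox n a) then show ?case by (cases t) auto
next
  case (fCBox n a) then show ?case by (cases t) auto
qed


lemma freein_subst: "freein m s \<Longrightarrow> s = subst \<sigma> t \<Longrightarrow> \<exists>n. freein n t \<and> freein m (\<sigma> n)"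
proof (induction arbitrary: \<sigma> t rule: freein.induct)
  case (fVar n) then show ?case by (cases t) (auto, metis freein.fVar)
next
  case (fApp1 n a b) then show ?case by (cases t) (auto, metis fApp1.hyps freein.fApp1 freein.fVar)
next
  case (fApp2 n b a) then show ?case by (cases t) (auto, metis fApp2.hyps freein.fApp2 freein.fVar)
next
  case (fLam n a) show ?case
  proof (cases "\<exists>x. t = Var x")
    case True then obtain x where "t = Var x" by blast
    with fLam.prems fLam.hyps show ?thesis by (auto intro!: exI[of _ x]) (metis freein.fLam)
  next
    case False
    with fLam.prems obtain t' where t: "t = Lam t'" and a: "a = subst (lift \<sigma>) t'"
      by (cases t) auto
    from fLam.IH[OF a] obtain k where k: "freein k t'" "freein (Suc n) (lift \<sigma> k)" by blast
    obtain j where j: "k = Suc j" using k(2) by (cases k) auto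
    with k obtain i where "Suc n = Suc i" "freein i (\<sigma> j)" using freein_ren by fastforce
    with k t j show ?thesis by auto
  qed
next
  case (fLamI n a) show ?case
  proof (cases "\<exists>x. t = Var x")
    case True then obtain x where "t = Var x" by blast
    with fLamI.prems fLamI.hyps show ?thesis by (auto intro!: exI[of _ x]) (metis freein.fLamI)
  next
    case False
    with fLamI.prems obtain t' where t: "t = LamI t'" and a: "a = subst (lift \<sigma>) t'"
      by (cases t) auto
    from fLamI.IH[OF a] obtain k where k: "freein k t'" "freein (Suc n) (lift \<sigma> k)" by blast
    obtain j where j: "k = Suc j" using k(2) by (cases k) auto
    with k obtain i where "Suc n = Suc i" "freein i (\<sigma> j)" using freein_ren by fastforce
    with k t j show ?thesis by auto
  qed
next
  case (fLamC n a) show ?case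
  proof (cases "\<exists>x. t = Var x")
    case True then obtain x where "t = Var x" by blast
    with fLamC.prems fLamC.hyps show ?thesis by (auto intro!: exI[of _ x]) (metis freein.fLamC)
  next
    case False
    with fLamC.prems obtain t' where t: "t = LamC t'" and a: "a = subst (lift \<sigma>) t'"
      by (cases t) auto
    from fLamC.IH[OF a] obtain k where k: "freein k t'" "freein (Suc n) (lift \<sigma> k)" by blast
    obtain j where j: "k = Suc j" using k(2) by (cases k) auto
    with k obtain i where "Suc n = Suc i" "freein i (\<sigma> j)" using freein_ren by fastforce
    with k t j show ?thesis by auto
  qed
next
  case (fIBox n a) then show ?case by (cases t) (auto, metis fIBox.hyps freein.fIBox freein.fVar)
next
  case (fCBox n a) then show ?case by (cases t) (auto, metis fCBox.hyps freein.fCBox freein.fVar)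
qed

lemma lift_agree: "(\<forall>n. freein (Suc n) t \<longrightarrow> \<sigma> n = \<sigma>' n) \<Longrightarrow> freein n t \<Longrightarrow> lift \<sigma> n = lift \<sigma>' n"
  by (cases n) auto

lemma subst_cong: "(\<forall>n. freein n t \<longrightarrow> \<sigma> n = \<sigma>' n) \<Longrightarrow> subst \<sigma> t = subst \<sigma>' t"
  apply (rule trm_coind[where R="\<lambda>a b. \<exists>s s' u. a = subst s u \<and> b = subst s' u \<and> (\<forall>n. freein n u \<longrightarrow> s n = s' n)"])
   apply blast
  apply (elim exE conjE)
  apply (case_tac u)
  apply simp_all
  subgoal by blast
  subgoal by (rule disjI2, rule disjI1, intro exI conjI, rule refl, rule refl, auto intro: lift_agree)
  subgoal by (rule disjI2, rule disjI1, intro exI conjI, rule refl, rule refl, auto intro: lift_agree)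
  subgoal by (rule disjI2, rule disjI1, intro exI conjI, rule refl, rule refl, auto intro: lift_agree)
  subgoal by blast
  subgoal by blast
  done


inductive ok :: "(nat \<Rightarrow> bool) \<Rightarrow> (nat \<Rightarrow> bool) \<Rightarrow> trm \<Rightarrow> bool" where
  okVar: "\<not> C n \<Longrightarrow> ok P C (Var n)"
| okApp: "ok P C a \<Longrightarrow> ok P C b \<Longrightarrow> ok P C (App a b)"
| okLam: "ok (case_nat True P) (case_nat False C) a \<Longrightarrow> ok P C (Lam a)"
| okLamI: "ok (case_nat True P) (case_nat False C) a \<Longrightarrow> ok P C (LamI a)"
| okLamC: "ok (case_nat False P) (case_nat True C) a \<Longrightarrow> ok P C (LamC a)"
| okIBox: "ok P C a \<Longrightarrow> ok P C (IBox a)"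
| okCBox: "(\<forall>n. P n \<longrightarrow> \<not> freein n a) \<Longrightarrow> ok P C (CBox a)"

inductive_simps ok_simps[simp]:
  "ok P C (Var n)" "ok P C (App a b)" "ok P C (Lam a)" "ok P C (LamI a)"
  "ok P C (LamC a)" "ok P C (IBox a)" "ok P C (CBox a)"

lemma ok_ren: "ok P C t \<Longrightarrow> (\<forall>n. P' (f n) \<longrightarrow> P n) \<Longrightarrow> (\<forall>n. C' (f n) \<longrightarrow> C n) \<Longrightarrow> ok P' C' (ren f t)"
proof (induction arbitrary: P' C' f rule: ok.induct)
  case (okCBox P a C)
  then show ?case using freein_ren by fastforce
qed (auto split: nat.splits)

lemma ok_mono: "ok P C t \<Longrightarrow> (\<forall>n. P' n \<longrightarrow> P n) \<Longrightarrow> (\<forall>n. C' n \<longrightarrow> C n) \<Longrightarrow> ok P' C' t"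
proof (induction arbitrary: P' C' rule: ok.induct)
  case (okLam P C a) show ?case by (simp, rule okLam.IH) (use okLam.prems in \<open>auto split: nat.splits\<close>)
next
  case (okLamI P C a) show ?case by (simp, rule okLamI.IH) (use okLamI.prems in \<open>auto split: nat.splits\<close>)
next
  case (okLamC P C a) show ?case by (simp, rule okLamC.IH) (use okLamC.prems in \<open>auto split: nat.splits\<close>)
qed auto

lemma ok_subst: "ok P C t \<Longrightarrow> (\<forall>n. \<not> C n \<longrightarrow> ok Q D (\<sigma> n)) \<Longrightarrow> (\<forall>n m. \<not> P n \<longrightarrow> Q m \<longrightarrow> \<not> freein m (\<sigma> n)) \<Longrightarrow> ok Q D (subst \<sigma> t)"
proof (induction arbitrary: Q D \<sigma> rule: ok.induct)
  case (okCBox P a C)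
  then show ?case using freein_subst by fastforce
next
  case (okLam P C a)
  show ?case
  proof (simp, rule okLam.IH)
    show "\<forall>n. \<not> case_nat False C n \<longrightarrow> ok (case_nat True Q) (case_nat False D) (lift \<sigma> n)"
      using okLam.prems(1) by (auto split: nat.splits intro!: ok_ren)
    show "\<forall>n m. \<not> case_nat True P n \<longrightarrow> case_nat True Q m \<longrightarrow> \<not> freein m (lift \<sigma> n)"
      using okLam.prems(2) by (auto split: nat.splits dest!: freein_ren[OF _ refl])
  qed
next
  case (okLamI P C a)
  show ?case
  proof (simp, rule okLamI.IH)
    show "\<forall>n. \<not> case_nat False C n \<longrightarrow> ok (case_nat True Q) (case_nat False D) (lift \<sigma> n)"
      using okLamI.prems(1) by (auto split: nat.splits intro!: ok_ren)
    show "\<forall>n m. \<not> case_nat True P n \<longrightarrow> case_nat True Q m \<longrightarrow> \<not> freein m (lift \<sigma> n)"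
      using okLamI.prems(2) by (auto split: nat.splits dest!: freein_ren[OF _ refl])
  qed
next
  case (okLamC P C a)
  show ?case
  proof (simp, rule okLamC.IH)
    show "\<forall>n. \<not> case_nat True C n \<longrightarrow> ok (case_nat False Q) (case_nat True D) (lift \<sigma> n)"
      using okLamC.prems(1) by (auto split: nat.splits intro!: ok_ren)
    show "\<forall>n m. \<not> case_nat False P n \<longrightarrow> case_nat False Q m \<longrightarrow> \<not> freein m (lift \<sigma> n)"
      using okLamC.prems(2) by (auto split: nat.splits dest!: freein_ren[OF _ refl])
  qed
qed auto


inductive par :: "trm \<Rightarrow> trm \<Rightarrow> bool" where
  pRefl: "par M M"
| pApp: "par a a' \<Longrightarrow> par b b' \<Longrightarrow> par (App a b) (App a' b')"
| pLam: "par a a' \<Longrightarrow> par (Lam a) (Lam a')"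
| pLamI: "par a a' \<Longrightarrow> par (LamI a) (LamI a')"
| pLamC: "par a a' \<Longrightarrow> par (LamC a) (LamC a')"
| pIBox: "par a a' \<Longrightarrow> par (IBox a) (IBox a')"
| pB1: "par a a' \<Longrightarrow> par b b' \<Longrightarrow> par (App (Lam a) b) (subst0 a' b')"
| pB2: "par a a' \<Longrightarrow> par b b' \<Longrightarrow> par (App (LamI a) (IBox b)) (subst0 a' b')"
| pB3: "par a a' \<Longrightarrow> par (App (LamC a) (CBox b)) (subst0 a' b)"

lemma par_ren: "par M N \<Longrightarrow> par (ren f M) (ren f N)"
proof (induction arbitrary: f rule: par.induct)
  case (pB1 a a' b b') then show ?case by (simp add: ren_subst0 par.pB1)
next
  case (pB2 a a' b b') then show ?case by (simp add: ren_subst0 par.pB2)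
next
  case (pB3 a a' b) then show ?case by (simp add: ren_subst0 par.pB3)
qed (auto intro: par.intros)

lemma par_subst_refl: "ok P C t \<Longrightarrow> (\<forall>n. \<not> C n \<longrightarrow> par (\<sigma> n) (\<sigma>' n)) \<Longrightarrow> (\<forall>n. \<not> P n \<longrightarrow> \<sigma> n = \<sigma>' n)
  \<Longrightarrow> par (subst \<sigma> t) (subst \<sigma>' t)"
proof (induction arbitrary: \<sigma> \<sigma>' rule: ok.induct)
  case (okCBox P a C)
  have "subst \<sigma> a = subst \<sigma>' a" by (rule subst_cong) (use okCBox in auto)
  then show ?case by (simp add: pRefl)
next
  case (okLam P C a)
  then show ?case by (simp, intro pLam okLam.IH) (auto split: nat.splits intro: par_ren pRefl)
next
  case (okLamI P C a)
  then show ?case by (simp, intro pLamI okLamI.IH) (auto split: nat.splits intro: par_ren pRefl)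
next
  case (okLamC P C a)
  then show ?case by (simp, intro pLamC okLamC.IH) (auto split: nat.splits intro: par_ren pRefl)
qed (auto intro: par.intros)

lemma par_ok: "par M N \<Longrightarrow> ok P C M \<Longrightarrow> ok P C N"
proof (induction arbitrary: P C rule: par.induct)
  case (pB1 a a' b b')
  show ?case unfolding subst0_def
    by (rule ok_subst[where P="case_nat True P" and C="case_nat False C"]) (use pB1 in \<open>auto split: nat.splits\<close>)
next
  case (pB2 a a' b b')
  show ?case unfolding subst0_def
    by (rule ok_subst[where P="case_nat True P" and C="case_nat False C"]) (use pB2 in \<open>auto split: nat.splits\<close>)
next
  case (pB3 a a' b)
  show ?case unfolding subst0_def
    by (rule ok_subst[where P="case_nat False P" and C="case_nat True C"]) (use pB3 in \<open>auto split: nat.splits\<close>)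
qed auto


lemma lift_par: "(\<forall>n. \<not> C n \<longrightarrow> par (\<sigma> n) (\<sigma>' n)) \<Longrightarrow> \<forall>n. \<not> case_nat b C n \<longrightarrow> par (lift \<sigma> n) (lift \<sigma>' n)"
  by (auto split: nat.splits intro: par_ren pRefl)

lemma lift_eq: "(\<forall>n. \<not> P n \<longrightarrow> \<sigma> n = \<sigma>' n) \<Longrightarrow> \<forall>n. \<not> case_nat b P n \<longrightarrow> lift \<sigma> n = lift \<sigma>' n"
  by (auto split: nat.splits)

lemma par_subst: "par M M' \<Longrightarrow> ok P C M \<Longrightarrow> (\<forall>n. \<not> C n \<longrightarrow> par (\<sigma> n) (\<sigma>' n)) \<Longrightarrow> (\<forall>n. \<not> P n \<longrightarrow> \<sigma> n = \<sigma>' n)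
  \<Longrightarrow> par (subst \<sigma> M) (subst \<sigma>' M')"
proof (induction arbitrary: P C \<sigma> \<sigma>' rule: par.induct)
  case (pRefl M) then show ?case by (rule par_subst_refl)
next
  case (pApp a a' b b') then show ?case by (auto intro!: par.pApp)
next
  case (pLam a a') show ?case
    by (simp, rule par.pLam, rule pLam.IH[OF _ lift_par[OF pLam.prems(2)] lift_eq[OF pLam.prems(3)]]) (use pLam.prems(1) in simp)
next
  case (pLamI a a') show ?case
    by (simp, rule par.pLamI, rule pLamI.IH[OF _ lift_par[OF pLamI.prems(2)] lift_eq[OF pLamI.prems(3)]]) (use pLamI.prems(1) in simp)
next
  case (pLamC a a') show ?case
    by (simp, rule par.pLamC, rule pLamC.IH[OF _ lift_par[OF pLamC.prems(2)] lift_eq[OF pLamC.prems(3)]]) (use pLamC.prems(1) in simp)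
next
  case (pIBox a a') then show ?case by (auto intro!: par.pIBox)
next
  case (pB1 a a' b b')
  have o: "ok (case_nat True P) (case_nat False C) a" "ok P C b" using pB1.prems(1) by auto
  have A: "par (subst (lift \<sigma>) a) (subst (lift \<sigma>') a')"
    by (rule pB1.IH(1)[OF o(1) lift_par[OF pB1.prems(2)] lift_eq[OF pB1.prems(3)]])
  have B: "par (subst \<sigma> b) (subst \<sigma>' b')" by (rule pB1.IH(2)[OF o(2) pB1.prems(2,3)])
  show ?case using par.pB1[OF A B] by (simp add: subst_subst0)
next
  case (pB2 a a' b b')
  have o: "ok (case_nat True P) (case_nat False C) a" "ok P C b" using pB2.prems(1) by auto
  have A: "par (subst (lift \<sigma>) a) (subst (lift \<sigma>') a')"
    by (rule pB2.IH(1)[OF o(1) lift_par[OF pB2.prems(2)] lift_eq[OF pB2.prems(3)]])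
  have B: "par (subst \<sigma> b) (subst \<sigma>' b')" by (rule pB2.IH(2)[OF o(2) pB2.prems(2,3)])
  show ?case using par.pB2[OF A B] by (simp add: subst_subst0)
next
  case (pB3 a a' b)
  have o: "ok (case_nat False P) (case_nat True C) a" "\<forall>n. P n \<longrightarrow> \<not> freein n b" using pB3.prems(1) by auto
  have A: "par (subst (lift \<sigma>) a) (subst (lift \<sigma>') a')"
    by (rule pB3.IH(1)[OF o(1) lift_par[OF pB3.prems(2)] lift_eq[OF pB3.prems(3)]])
  have "subst \<sigma> b = subst \<sigma>' b" by (rule subst_cong) (use o(2) pB3.prems(3) in auto)
  then show ?case using par.pB3[OF A, of "subst \<sigma> b"] by (simp add: subst_subst0)
qed

lemma subst0_par1: "par a a' \<Longrightarrow> ok (case_nat True P) (case_nat False C) a \<Longrightarrow> par b b' \<Longrightarrow> par (subst0 a b) (subst0 a' b')"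
  unfolding subst0_def by (erule par_subst) (auto split: nat.splits intro: pRefl)

lemma subst0_par3: "par a a' \<Longrightarrow> ok (case_nat False P) (case_nat True C) a \<Longrightarrow> par (subst0 a b) (subst0 a' b)"
  unfolding subst0_def by (erule par_subst) (auto split: nat.splits intro: pRefl)

inductive_cases parVarE: "par (Var n) N"
inductive_cases parLamE: "par (Lam a) N"
inductive_cases parLamIE: "par (LamI a) N"
inductive_cases parLamCE: "par (LamC a) N"
inductive_cases parIBoxE: "par (IBox a) N"
inductive_cases parCBoxE: "par (CBox a) N"
inductive_cases parAppE: "par (App a b) N"

lemma parLam: "par (Lam a) N \<Longrightarrow> \<exists>a'. N = Lam a' \<and> par a a'"
  by (erule parLamE) (auto intro: pRefl)
lemma parLamI: "par (LamI a) N \<Longrightarrow> \<exists>a'. N = LamI a' \<and> par a a'"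
  by (erule parLamIE) (auto intro: pRefl)
lemma parLamC: "par (LamC a) N \<Longrightarrow> \<exists>a'. N = LamC a' \<and> par a a'"
  by (erule parLamCE) (auto intro: pRefl)
lemma parIBox: "par (IBox a) N \<Longrightarrow> \<exists>a'. N = IBox a' \<and> par a a'"
  by (erule parIBoxE) (auto intro: pRefl)
lemma parCBox: "par (CBox a) N \<Longrightarrow> N = CBox a"
  by (erule parCBoxE) auto


lemma parApp: "par (App a b) N \<Longrightarrow>
    (\<exists>a' b'. N = App a' b' \<and> par a a' \<and> par b b')
  \<or> (\<exists>a0 a' b'. a = Lam a0 \<and> N = subst0 a' b' \<and> par a0 a' \<and> par b b')
  \<or> (\<exists>a0 b0 a' b'. a = LamI a0 \<and> b = IBox b0 \<and> N = subst0 a' b' \<and> par a0 a' \<and> par b0 b')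
  \<or> (\<exists>a0 b0 a'. a = LamC a0 \<and> b = CBox b0 \<and> N = subst0 a' b0 \<and> par a0 a')"
  by (erule parAppE) (auto intro: pRefl)

lemma par_diamond: "par M M1 \<Longrightarrow> ok P C M \<Longrightarrow> par M M2 \<Longrightarrow> \<exists>M3. par M1 M3 \<and> par M2 M3"
proof (induction arbitrary: P C M2 rule: par.induct)
  case (pRefl M) then show ?case by (auto intro: par.pRefl)
next
  case (pApp a a1 b b1)
  have oa: "ok P C a" and ob: "ok P C b" using pApp.prems(1) by auto
  from parApp[OF pApp.prems(2)] show ?case
  proof (elim disjE exE conjE)
    fix a2 b2 assume M2: "M2 = App a2 b2" and p: "par a a2" "par b b2"
    obtain x where x: "par a1 x" "par a2 x" using pApp.IH(1)[OF oa p(1)] by blast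
    obtain y where y: "par b1 y" "par b2 y" using pApp.IH(2)[OF ob p(2)] by blast
    show ?thesis using x y M2 by (auto intro: par.pApp)
  next
    fix a0 a2 b2 assume a: "a = Lam a0" and M2: "M2 = subst0 a2 b2" and p: "par a0 a2" "par b b2"
    obtain a1' where a1: "a1 = Lam a1'" "par a0 a1'" using parLam pApp.hyps(1) a by blast
    obtain X where X: "par a1 X" "par (Lam a2) X" using pApp.IH(1)[OF oa, of "Lam a2"] a p by (auto intro: par.pLam)
    obtain x where x: "X = Lam x" "par a2 x" using parLam[OF X(2)] by blast
    have x1: "par a1' x" using X(1) a1 x parLam by fastforce
    obtain y where y: "par b1 y" "par b2 y" using pApp.IH(2)[OF ob p(2)] by blast
    have o0: "ok (case_nat True P) (case_nat False C) a0" using oa a by simp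
    have "par (subst0 a2 b2) (subst0 x y)" by (rule subst0_par1[OF x(2) par_ok[OF p(1) o0] y(2)])
    moreover have "par (App a1 b1) (subst0 x y)" using a1 x1 y by (auto intro: par.pB1)
    ultimately show ?thesis using M2 by blast
  next
    fix a0 b0 a2 b2 assume a: "a = LamI a0" and b: "b = IBox b0" and M2: "M2 = subst0 a2 b2" and p: "par a0 a2" "par b0 b2"
    obtain a1' where a1: "a1 = LamI a1'" "par a0 a1'" using parLamI pApp.hyps(1) a by blast
    obtain b1' where b1: "b1 = IBox b1'" "par b0 b1'" using parIBox pApp.hyps(2) b by blast
    obtain X where X: "par a1 X" "par (LamI a2) X" using pApp.IH(1)[OF oa, of "LamI a2"] a p by (auto intro: par.pLamI)
    obtain x where x: "X = LamI x" "par a2 x" using parLamI[OF X(2)] by blast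
    have x1: "par a1' x" using X(1) a1 x parLamI by fastforce
    obtain Y where Y: "par b1 Y" "par (IBox b2) Y" using pApp.IH(2)[OF ob, of "IBox b2"] b p by (auto intro: par.pIBox)
    obtain y where y: "Y = IBox y" "par b2 y" using parIBox[OF Y(2)] by blast
    have y1: "par b1' y" using Y(1) b1 y parIBox by fastforce
    have o0: "ok (case_nat True P) (case_nat False C) a0" using oa a by simp
    have "par (subst0 a2 b2) (subst0 x y)" by (rule subst0_par1[OF x(2) par_ok[OF p(1) o0] y(2)])
    moreover have "par (App a1 b1) (subst0 x y)" using a1 x1 b1 y1 by (auto intro: par.pB2)
    ultimately show ?thesis using M2 by blast
  next
    fix a0 b0 a2 assume a: "a = LamC a0" and b: "b = CBox b0" and M2: "M2 = subst0 a2 b0" and p: "par a0 a2"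
    obtain a1' where a1: "a1 = LamC a1'" "par a0 a1'" using parLamC pApp.hyps(1) a by blast
    have b1: "b1 = CBox b0" using parCBox pApp.hyps(2) b by blast
    obtain X where X: "par a1 X" "par (LamC a2) X" using pApp.IH(1)[OF oa, of "LamC a2"] a p by (auto intro: par.pLamC)
    obtain x where x: "X = LamC x" "par a2 x" using parLamC[OF X(2)] by blast
    have x1: "par a1' x" using X(1) a1 x parLamC by fastforce
    have o0: "ok (case_nat False P) (case_nat True C) a0" using oa a by simp
    have "par (subst0 a2 b0) (subst0 x b0)" by (rule subst0_par3[OF x(2) par_ok[OF p(1) o0]])
    moreover have "par (App a1 b1) (subst0 x b0)" using a1 x1 b1 by (auto intro: par.pB3)
    ultimately show ?thesis using M2 by blast
  qed
next
  case (pLam a a1)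
  obtain a2 where a2: "M2 = Lam a2" "par a a2" using parLam[OF pLam.prems(2)] by blast
  obtain x where "par a1 x" "par a2 x" using pLam.IH[OF _ a2(2)] pLam.prems(1) by auto
  then show ?case using a2 by (auto intro: par.pLam)
next
  case (pLamI a a1)
  obtain a2 where a2: "M2 = LamI a2" "par a a2" using parLamI[OF pLamI.prems(2)] by blast
  obtain x where "par a1 x" "par a2 x" using pLamI.IH[OF _ a2(2)] pLamI.prems(1) by auto
  then show ?case using a2 by (auto intro: par.pLamI)
next
  case (pLamC a a1)
  obtain a2 where a2: "M2 = LamC a2" "par a a2" using parLamC[OF pLamC.prems(2)] by blast
  obtain x where "par a1 x" "par a2 x" using pLamC.IH[OF _ a2(2)] pLamC.prems(1) by auto
  then show ?case using a2 by (auto intro: par.pLamC)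
next
  case (pIBox a a1)
  obtain a2 where a2: "M2 = IBox a2" "par a a2" using parIBox[OF pIBox.prems(2)] by blast
  obtain x where "par a1 x" "par a2 x" using pIBox.IH[OF _ a2(2)] pIBox.prems(1) by auto
  then show ?case using a2 by (auto intro: par.pIBox)
next
  case (pB1 a a1 b b1)
  have oa: "ok (case_nat True P) (case_nat False C) a" and ob: "ok P C b" using pB1.prems(1) by auto
  from parApp[OF pB1.prems(2)] show ?case
  proof (elim disjE exE conjE)
    fix a2' b2 assume M2: "M2 = App a2' b2" and p: "par (Lam a) a2'" "par b b2"
    obtain a2 where a2: "a2' = Lam a2" "par a a2" using parLam[OF p(1)] by blast
    obtain x where x: "par a1 x" "par a2 x" using pB1.IH(1)[OF oa a2(2)] by blast
    obtain y where y: "par b1 y" "par b2 y" using pB1.IH(2)[OF ob p(2)] by blast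
    have "par (subst0 a1 b1) (subst0 x y)" by (rule subst0_par1[OF x(1) par_ok[OF pB1.hyps(1) oa] y(1)])
    moreover have "par M2 (subst0 x y)" using M2 a2 x y by (auto intro: par.pB1)
    ultimately show ?thesis by blast
  next
    fix a0 a2 b2 assume a: "Lam a = Lam a0" and M2: "M2 = subst0 a2 b2" and p: "par a0 a2" "par b b2"
    obtain x where x: "par a1 x" "par a2 x" using pB1.IH(1)[OF oa] p a by auto
    obtain y where y: "par b1 y" "par b2 y" using pB1.IH(2)[OF ob p(2)] by blast
    have "par (subst0 a1 b1) (subst0 x y)" by (rule subst0_par1[OF x(1) par_ok[OF pB1.hyps(1) oa] y(1)])
    moreover have "par M2 (subst0 x y)" using M2 a oa p(1) x y by (auto intro: subst0_par1 par_ok)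
    ultimately show ?thesis by blast
  qed auto
next
  case (pB2 a a1 b b1)
  have oa: "ok (case_nat True P) (case_nat False C) a" and ob: "ok P C b" using pB2.prems(1) by auto
  from parApp[OF pB2.prems(2)] show ?case
  proof (elim disjE exE conjE)
    fix a2' b2' assume M2: "M2 = App a2' b2'" and p: "par (LamI a) a2'" "par (IBox b) b2'"
    obtain a2 where a2: "a2' = LamI a2" "par a a2" using parLamI[OF p(1)] by blast
    obtain b2 where b2: "b2' = IBox b2" "par b b2" using parIBox[OF p(2)] by blast
    obtain x where x: "par a1 x" "par a2 x" using pB2.IH(1)[OF oa a2(2)] by blast
    obtain y where y: "par b1 y" "par b2 y" using pB2.IH(2)[OF ob b2(2)] by blast
    have "par (subst0 a1 b1) (subst0 x y)" by (rule subst0_par1[OF x(1) par_ok[OF pB2.hyps(1) oa] y(1)])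
    moreover have "par M2 (subst0 x y)" using M2 a2 b2 x y by (auto intro: par.pB2)
    ultimately show ?thesis by blast
  next
    fix a0 b0 a2 b2 assume a: "LamI a = LamI a0" "IBox b = IBox b0" and M2: "M2 = subst0 a2 b2" and p: "par a0 a2" "par b0 b2"
    obtain x where x: "par a1 x" "par a2 x" using pB2.IH(1)[OF oa] p a by auto
    obtain y where y: "par b1 y" "par b2 y" using pB2.IH(2)[OF ob] p a by auto
    have "par (subst0 a1 b1) (subst0 x y)" by (rule subst0_par1[OF x(1) par_ok[OF pB2.hyps(1) oa] y(1)])
    moreover have "par M2 (subst0 x y)" using M2 a oa p(1) x y by (auto intro: subst0_par1 par_ok)
    ultimately show ?thesis by blast
  qed auto
next
  case (pB3 a a1 b)
  have oa: "ok (case_nat False P) (case_nat True C) a" using pB3.prems(1) by auto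
  from parApp[OF pB3.prems(2)] show ?case
  proof (elim disjE exE conjE)
    fix a2' b2' assume M2: "M2 = App a2' b2'" and p: "par (LamC a) a2'" "par (CBox b) b2'"
    obtain a2 where a2: "a2' = LamC a2" "par a a2" using parLamC[OF p(1)] by blast
    have b2: "b2' = CBox b" using parCBox[OF p(2)] .
    obtain x where x: "par a1 x" "par a2 x" using pB3.IH[OF oa a2(2)] by blast
    have "par (subst0 a1 b) (subst0 x b)" by (rule subst0_par3[OF x(1) par_ok[OF pB3.hyps(1) oa]])
    moreover have "par M2 (subst0 x b)" using M2 a2 b2 x by (auto intro: par.pB3)
    ultimately show ?thesis by blast
  next
    fix a0 b0 a2 assume a: "LamC a = LamC a0" "CBox b = CBox b0" and M2: "M2 = subst0 a2 b0" and p: "par a0 a2"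
    obtain x where x: "par a1 x" "par a2 x" using pB3.IH[OF oa] p a by auto
    have "par (subst0 a1 b) (subst0 x b)" by (rule subst0_par3[OF x(1) par_ok[OF pB3.hyps(1) oa]])
    moreover have "par M2 (subst0 x b)" using M2 a oa p(1) x by (auto intro: subst0_par3 par_ok)
    ultimately show ?thesis by blast
  qed auto
qed


lemma pars_ok: "par\<^sup>*\<^sup>* M N \<Longrightarrow> ok P C M \<Longrightarrow> ok P C N"
  by (induction rule: rtranclp_induct) (auto intro: par_ok)

lemma par_strip: "par\<^sup>*\<^sup>* M M2 \<Longrightarrow> ok P C M \<Longrightarrow> par M M1 \<Longrightarrow> \<exists>M3. par\<^sup>*\<^sup>* M1 M3 \<and> par M2 M3"
proof (induction rule: rtranclp_induct)
  case base then show ?case by blast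
next
  case (step Y Z)
  then obtain M3 where M3: "par\<^sup>*\<^sup>* M1 M3" "par Y M3" by blast
  have "ok P C Y" using pars_ok step by blast
  then obtain W where "par Z W" "par M3 W" using par_diamond[OF step(2) _ M3(2)] by blast
  then show ?case using M3 by (meson rtranclp.rtrancl_into_rtrancl)
qed

lemma par_conf: "par\<^sup>*\<^sup>* M N \<Longrightarrow> ok P C M \<Longrightarrow> par\<^sup>*\<^sup>* M L \<Longrightarrow> \<exists>X. par\<^sup>*\<^sup>* N X \<and> par\<^sup>*\<^sup>* L X"
proof (induction rule: rtranclp_induct)
  case base then show ?case by blast
next
  case (step Y Z)
  then obtain X where X: "par\<^sup>*\<^sup>* Y X" "par\<^sup>*\<^sup>* L X" by blast
  have "ok P C Y" using pars_ok step by blast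
  then obtain W where "par\<^sup>*\<^sup>* Z W" "par X W" using par_strip[OF X(1) _ step(2)] by blast
  then show ?case using X by (meson rtranclp.rtrancl_into_rtrancl)
qed

lemma red0_par: "red0 M N \<Longrightarrow> par M N"
proof (induction rule: red0.induct)
  case (base M N) then show ?case by (cases rule: basic_red.cases) (auto intro: par.intros)
qed (auto intro: par.intros)

lemma reds_App1: "red0\<^sup>*\<^sup>* a a' \<Longrightarrow> red0\<^sup>*\<^sup>* (App a b) (App a' b)"
  by (induction rule: rtranclp_induct) (auto intro: rtranclp.rtrancl_into_rtrancl red0.appL)
lemma reds_App2: "red0\<^sup>*\<^sup>* b b' \<Longrightarrow> red0\<^sup>*\<^sup>* (App a b) (App a b')"
  by (induction rule: rtranclp_induct) (auto intro: rtranclp.rtrancl_into_rtrancl red0.appR)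
lemma reds_Lam: "red0\<^sup>*\<^sup>* a a' \<Longrightarrow> red0\<^sup>*\<^sup>* (Lam a) (Lam a')"
  by (induction rule: rtranclp_induct) (auto intro: rtranclp.rtrancl_into_rtrancl red0.lam)
lemma reds_LamI: "red0\<^sup>*\<^sup>* a a' \<Longrightarrow> red0\<^sup>*\<^sup>* (LamI a) (LamI a')"
  by (induction rule: rtranclp_induct) (auto intro: rtranclp.rtrancl_into_rtrancl red0.lamI)
lemma reds_LamC: "red0\<^sup>*\<^sup>* a a' \<Longrightarrow> red0\<^sup>*\<^sup>* (LamC a) (LamC a')"
  by (induction rule: rtranclp_induct) (auto intro: rtranclp.rtrancl_into_rtrancl red0.lamC)
lemma reds_IBox: "red0\<^sup>*\<^sup>* a a' \<Longrightarrow> red0\<^sup>*\<^sup>* (IBox a) (IBox a')"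
  by (induction rule: rtranclp_induct) (auto intro: rtranclp.rtrancl_into_rtrancl red0.ibox)

lemma reds_App: "red0\<^sup>*\<^sup>* a a' \<Longrightarrow> red0\<^sup>*\<^sup>* b b' \<Longrightarrow> red0\<^sup>*\<^sup>* (App a b) (App a' b')"
  by (meson reds_App1 reds_App2 rtranclp_trans)

lemma par_reds: "par M N \<Longrightarrow> red0\<^sup>*\<^sup>* M N"
proof (induction rule: par.induct)
  case (pB1 a a' b b')
  have "red0\<^sup>*\<^sup>* (App (Lam a) b) (App (Lam a') b')" using pB1 by (auto intro: reds_App reds_Lam)
  moreover have "red0 (App (Lam a') b') (subst0 a' b')" by (auto intro: red0.base basic_red.intros)
  ultimately show ?case by (meson rtranclp.rtrancl_into_rtrancl)
next
  case (pB2 a a' b b')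
  have "red0\<^sup>*\<^sup>* (App (LamI a) (IBox b)) (App (LamI a') (IBox b'))" using pB2 by (auto intro: reds_App reds_LamI reds_IBox)
  moreover have "red0 (App (LamI a') (IBox b')) (subst0 a' b')" by (auto intro: red0.base basic_red.intros)
  ultimately show ?case by (meson rtranclp.rtrancl_into_rtrancl)
next
  case (pB3 a a' b)
  have "red0\<^sup>*\<^sup>* (App (LamC a) (CBox b)) (App (LamC a') (CBox b))" using pB3 by (auto intro: reds_App reds_LamC)
  moreover have "red0 (App (LamC a') (CBox b)) (subst0 a' b)" by (auto intro: red0.base basic_red.intros)
  ultimately show ?case by (meson rtranclp.rtrancl_into_rtrancl)
qed (auto intro: reds_App reds_Lam reds_LamI reds_LamC reds_IBox)

lemma pars_reds: "par\<^sup>*\<^sup>* M N \<Longrightarrow> red0\<^sup>*\<^sup>* M N"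
  by (induction rule: rtranclp_induct) (auto dest: par_reds)

lemma reds_pars: "red0\<^sup>*\<^sup>* M N \<Longrightarrow> par\<^sup>*\<^sup>* M N"
  by (induction rule: rtranclp_induct) (auto intro: rtranclp.rtrancl_into_rtrancl red0_par)

lemma derD: "der \<Gamma> M \<Longrightarrow> typ_ind der \<Gamma> M"
  by (erule der.cases) simp

inductive_cases tVarE: "typ_ind R \<Gamma> (Var n)"
inductive_cases tAppE: "typ_ind R \<Gamma> (App a b)"
inductive_cases tLamE: "typ_ind R \<Gamma> (Lam a)"
inductive_cases tLamIE: "typ_ind R \<Gamma> (LamI a)"
inductive_cases tLamCE: "typ_ind R \<Gamma> (LamC a)"
inductive_cases tIBoxE: "typ_ind R \<Gamma> (IBox a)"
inductive_cases tCBoxE: "typ_ind R \<Gamma> (CBox a)"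

lemma der_fv: "freein n M \<Longrightarrow> der \<Gamma> M \<Longrightarrow> \<Gamma> n \<noteq> None"
proof (induction arbitrary: \<Gamma> rule: freein.induct)
  case (fVar n) then show ?case by (auto dest!: derD elim!: tVarE)
next
  case (fApp1 n a b)
  from derD[OF fApp1.prems] obtain \<Gamma>1 \<Gamma>2 where s: "app_split \<Gamma> \<Gamma>1 \<Gamma>2" and t: "typ_ind der \<Gamma>1 a"
    by (auto elim!: tAppE)
  have "\<Gamma>1 n \<noteq> None" using fApp1.IH[OF der.intros[OF t]] .
  then show ?case using s unfolding app_split_def shared_def by (metis insert_iff)
next
  case (fApp2 n b a)
  from derD[OF fApp2.prems] obtain \<Gamma>1 \<Gamma>2 where s: "app_split \<Gamma> \<Gamma>1 \<Gamma>2" and t: "typ_ind der \<Gamma>2 b"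
    by (auto elim!: tAppE)
  have "\<Gamma>2 n \<noteq> None" using fApp2.IH[OF der.intros[OF t]] .
  then show ?case using s unfolding app_split_def shared_def by (metis insert_iff)
next
  case (fLam n a)
  from derD[OF fLam.prems] have t: "typ_ind der (ext PLin \<Gamma>) a" by (auto elim!: tLamE)
  show ?case using fLam.IH[OF der.intros[OF t]] by (simp add: ext_def)
next
  case (fLamI n a)
  from derD[OF fLamI.prems] obtain k where t: "typ_ind der (ext k \<Gamma>) a" by (auto elim!: tLamIE)
  show ?case using fLamI.IH[OF der.intros[OF t]] by (simp add: ext_def)
next
  case (fLamC n a)
  from derD[OF fLamC.prems] have t: "typ_ind der (ext PCoi \<Gamma>) a" by (auto elim!: tLamCE)
  show ?case using fLamC.IH[OF der.intros[OF t]] by (simp add: ext_def)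
next
  case (fIBox n a)
  from derD[OF fIBox.prems] have t: "typ_ind der (mi_env \<Gamma>) a" by (auto elim!: tIBoxE)
  show ?case using fIBox.IH[OF der.intros[OF t]] by (auto simp: mi_env_def split: option.splits)
next
  case (fCBox n a)
  from derD[OF fCBox.prems] have t: "der (mc_env \<Gamma>) a" by (auto elim!: tCBoxE)
  show ?case using fCBox.IH[OF t] by (auto simp: mc_env_def split: option.splits)
qed

definition PP :: "env \<Rightarrow> nat \<Rightarrow> bool" where "PP \<Gamma> n \<longleftrightarrow> \<Gamma> n \<noteq> Some PCoi \<and> \<Gamma> n \<noteq> Some PDag"
definition CC :: "env \<Rightarrow> nat \<Rightarrow> bool" where "CC \<Gamma> n \<longleftrightarrow> \<Gamma> n = Some PCoi"

lemma PP_ext: "PP (ext k \<Gamma>) = case_nat (k \<noteq> PCoi \<and> k \<noteq> PDag) (PP \<Gamma>)"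
  by (rule ext, case_tac x) (auto simp: PP_def ext_def)
lemma CC_ext: "CC (ext k \<Gamma>) = case_nat (k = PCoi) (CC \<Gamma>)"
  by (rule ext, case_tac x) (auto simp: CC_def ext_def)

lemma split_PP:
  assumes "app_split \<Gamma> \<Gamma>1 \<Gamma>2"
  shows "\<forall>n. PP \<Gamma> n \<longrightarrow> PP \<Gamma>1 n" "\<forall>n. PP \<Gamma> n \<longrightarrow> PP \<Gamma>2 n"
    "\<forall>n. CC \<Gamma> n \<longrightarrow> CC \<Gamma>1 n" "\<forall>n. CC \<Gamma> n \<longrightarrow> CC \<Gamma>2 n"
proof -
  have h: "(\<Gamma> n \<in> {Some PLin, Some PInd} \<and> ((\<Gamma>1 n = \<Gamma> n \<and> \<Gamma>2 n = None) \<or> (\<Gamma>1 n = None \<and> \<Gamma>2 n = \<Gamma> n)))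
     \<or> (shared (\<Gamma> n) \<and> \<Gamma>1 n = \<Gamma> n \<and> \<Gamma>2 n = \<Gamma> n)" for n
    using assms unfolding app_split_def by blast
  show "\<forall>n. PP \<Gamma> n \<longrightarrow> PP \<Gamma>1 n"
    apply (intro allI impI) subgoal for n using h[of n] by (auto simp: PP_def CC_def shared_def) done
  show "\<forall>n. PP \<Gamma> n \<longrightarrow> PP \<Gamma>2 n"
    apply (intro allI impI) subgoal for n using h[of n] by (auto simp: PP_def CC_def shared_def) done
  show "\<forall>n. CC \<Gamma> n \<longrightarrow> CC \<Gamma>1 n"
    apply (intro allI impI) subgoal for n using h[of n] by (auto simp: PP_def CC_def shared_def) done
  show "\<forall>n. CC \<Gamma> n \<longrightarrow> CC \<Gamma>2 n"
    apply (intro allI impI) subgoal for n using h[of n] by (auto simp: PP_def CC_def shared_def) done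

qed

lemma mi_PP: "\<forall>n. PP \<Gamma> n \<longrightarrow> PP (mi_env \<Gamma>) n" "\<forall>n. CC \<Gamma> n \<longrightarrow> CC (mi_env \<Gamma>) n"
  by (auto simp: PP_def CC_def mi_env_def split: option.splits pat.splits)

lemma mc_PP: "mc_env \<Gamma> n \<noteq> None \<Longrightarrow> \<not> PP \<Gamma> n"
  by (auto simp: PP_def mc_env_def split: option.splits pat.splits)

lemma typ_ok: "typ_ind der \<Gamma> M \<Longrightarrow> ok (PP \<Gamma>) (CC \<Gamma>) M"
proof (induction rule: typ_ind.induct)
  case (vl \<Gamma> x) then show ?case by (simp add: CC_def)
next
  case (vd \<Gamma> x) then show ?case by (simp add: CC_def)
next
  case (va \<Gamma> x) then show ?case by (simp add: CC_def)
next
  case (a \<Gamma> \<Gamma>1 \<Gamma>2 M N)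
  have "ok (PP \<Gamma>) (CC \<Gamma>) M" by (rule ok_mono[OF a.IH(1) split_PP(1,3)[OF a.hyps(1)]])
  moreover have "ok (PP \<Gamma>) (CC \<Gamma>) N" by (rule ok_mono[OF a.IH(2) split_PP(2,4)[OF a.hyps(1)]])
  ultimately show ?case by simp
next
  case (ll \<Gamma> M) then show ?case by (simp add: PP_ext CC_ext)
next
  case (li1 \<Gamma> M) then show ?case by (simp add: PP_ext CC_ext)
next
  case (li2 \<Gamma> M) then show ?case by (simp add: PP_ext CC_ext)
next
  case (lc \<Gamma> M) then show ?case by (simp add: PP_ext CC_ext)
next
  case (mi \<Gamma> M)
  have "ok (PP \<Gamma>) (CC \<Gamma>) M" by (rule ok_mono[OF mi.IH mi_PP])
  then show ?case by simp
next
  case (mc \<Gamma> M)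
  show ?case using der_fv[OF _ mc.hyps(2)] mc_PP by auto
qed

theorem mainTheorem20:
  assumes "is_term M" and "red0\<^sup>*\<^sup>* M N" and "red0\<^sup>*\<^sup>* M L"
  shows "\<exists>P. red0\<^sup>*\<^sup>* N P \<and> red0\<^sup>*\<^sup>* L P"
proof -
  from assms(1) obtain \<Gamma> where "der \<Gamma> M" unfolding is_term_def by blast
  then have "typ_ind der \<Gamma> M" by (rule derD)
  then have o: "ok (PP \<Gamma>) (CC \<Gamma>) M" by (rule typ_ok)
  obtain X where "par\<^sup>*\<^sup>* N X" "par\<^sup>*\<^sup>* L X"
    using par_conf[OF reds_pars[OF assms(2)] o reds_pars[OF assms(3)]] by blast
  then show ?thesis using pars_reds by blast
qed


end
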